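(* Let $h,n\geq 2$. If every subgroup of $G=S_h\times S_n$ is a symmetry group with respect to $(h,n)$, then $\gcd(h,n!)=1$.
   Context: Permutations compose as $(\sigma\tau)(x)=\sigma(\tau(x))$. Let $\mathcal{P}=(S_n)^h$ (preference profiles), with $G$ acting by $(p^{(\varphi,\psi)})_i=\psi\,p_{\varphi^{-1}(i)}$. A social preference function (SPF) is any $F:\mathcal{P}\to S_n$; its symmetry group is $G(F)=\{(\varphi,\psi)\in G: F(p^{(\varphi,\psi)})=\psi F(p)\ \forall p\}$. $U\leq G$ is a symmetry group with respect to $(h,n)$ if $U=G(F)$ for some SPF $F$. *)

theory Defs
  imports "HOL-Algebra.Sym_Groups"
begin

text \<open>Voters are 1..h, alternatives are 1..n. A profile assigns to each voter
  a permutation of the alternatives; outside the voter set it is id (extensional).\<close>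

definition profiles :: "nat \<Rightarrow> nat \<Rightarrow> (nat \<Rightarrow> nat \<Rightarrow> nat) set" where
  "profiles h n = {p. (\<forall>i\<in>{1..h}. p i permutes {1..n}) \<and> (\<forall>i. i \<notin> {1..h} \<longrightarrow> p i = id)}"

definition prof_act :: "nat \<Rightarrow> (nat \<Rightarrow> nat \<Rightarrow> nat) \<Rightarrow> (nat \<Rightarrow> nat) \<times> (nat \<Rightarrow> nat) \<Rightarrow> (nat \<Rightarrow> nat \<Rightarrow> nat)" where
  "prof_act h p g = (\<lambda>i. if i \<in> {1..h} then snd g \<circ> p (Hilbert_Choice.inv (fst g) i) else id)"

definition is_SPF :: "nat \<Rightarrow> nat \<Rightarrow> ((nat \<Rightarrow> nat \<Rightarrow> nat) \<Rightarrow> (nat \<Rightarrow> nat)) \<Rightarrow> bool" where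
  "is_SPF h n F \<longleftrightarrow> (\<forall>p\<in>profiles h n. F p permutes {1..n})"

definition spf_symmetry_group :: "nat \<Rightarrow> nat \<Rightarrow> ((nat \<Rightarrow> nat \<Rightarrow> nat) \<Rightarrow> (nat \<Rightarrow> nat)) \<Rightarrow> ((nat \<Rightarrow> nat) \<times> (nat \<Rightarrow> nat)) set" where
  "spf_symmetry_group h n F =
     {(\<phi>, \<psi>). \<phi> permutes {1..h} \<and> \<psi> permutes {1..n} \<and>
        (\<forall>p\<in>profiles h n. F (prof_act h p (\<phi>, \<psi>)) = \<psi> \<circ> F p)}"

definition is_symmetry_group :: "nat \<Rightarrow> nat \<Rightarrow> ((nat \<Rightarrow> nat) \<times> (nat \<Rightarrow> nat)) set \<Rightarrow> bool" where
  "is_symmetry_group h n U \<longleftrightarrow> (\<exists>F. is_SPF h n F \<and> U = spf_symmetry_group h n F)"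

end

theory Submission
  imports Defs "HOL-Computational_Algebra.Primes"
begin

definition rot :: "nat \<Rightarrow> nat \<Rightarrow> nat \<Rightarrow> nat" where
  "rot q k x = (if x \<in> {1..q} then (x - 1 + k) mod q + 1 else x)"

lemma rot_comp:
  assumes "q > 0" shows "rot q a \<circ> rot q b = rot q (a + b)"
proof
  fix x
  show "(rot q a \<circ> rot q b) x = rot q (a + b) x"
  proof (cases "x \<in> {1..q}")
    case True
    have "(x - 1 + b) mod q < q" using assms by simp
    then have m: "(x - 1 + b) mod q + 1 \<in> {1..q}" by simp
    have "((x - 1 + b) mod q + 1 - 1 + a) mod q = ((x - 1 + b) mod q + a) mod q" by simp
    also have "\<dots> = (x - 1 + b + a) mod q" by (rule mod_add_left_eq)
    also have "\<dots> = (x - 1 + (a + b)) mod q" by (simp add: ac_simps)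
    finally have e: "((x - 1 + b) mod q + 1 - 1 + a) mod q = (x - 1 + (a + b)) mod q" .
    have "(rot q a \<circ> rot q b) x = rot q a ((x - 1 + b) mod q + 1)" using True by (simp add: rot_def)
    also have "\<dots> = ((x - 1 + b) mod q + 1 - 1 + a) mod q + 1" using m by (simp only: rot_def if_True)
    also have "\<dots> = rot q (a + b) x" using e True by (simp add: rot_def)
    finally show ?thesis .
  next
    case False
    then have "rot q b x = x" "rot q a x = x" "rot q (a + b) x = x" by (simp_all only: rot_def if_False)
    then show ?thesis by simp
  qed
qed

lemma rot_mult: "rot q (k * q) = id"
proof
  fix x show "rot q (k * q) x = id x"
  proof (cases "x \<in> {1..q}")
    case True
    then have "x - 1 < q" by auto
    then have "(x - 1 + k * q) mod q = x - 1" by simp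
    moreover have "rot q (k * q) x = (x - 1 + k * q) mod q + 1" using True by (simp only: rot_def if_True)
    ultimately show ?thesis using True by simp
  next
    case False then show ?thesis by (simp only: rot_def if_False id_apply)
  qed
qed

lemma rot_permutes:
  assumes "q > 0" shows "rot q k permutes {1..q}"
proof (rule bij_imp_permutes)
  have e: "k + (q - k mod q) = (k div q + 1) * q"
  proof -
    have "k mod q < q" using assms by simp
    moreover have "k = k div q * q + k mod q" by simp
    ultimately have "k + (q - k mod q) = k div q * q + q" by linarith
    then show ?thesis by (simp add: algebra_simps)
  qed
  have e2: "k + (q - k mod q) = (q - k mod q) + k" by simp
  have "rot q k \<circ> rot q (q - k mod q) = id" 
    using rot_comp[OF assms, of k "q - k mod q"] e rot_mult[of q "k div q + 1"] by simp
  moreover have "rot q (q - k mod q) \<circ> rot q k = id"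
    using rot_comp[OF assms, of "q - k mod q" k] e e2 rot_mult[of q "k div q + 1"] by simp
  ultimately have b: "bij (rot q k)" using o_bij by blast
  have s: "rot q k ` {1..q} \<subseteq> {1..q}" using assms
    by (auto simp add: rot_def Suc_le_eq)
  show "bij_betw (rot q k) {1..q} {1..q}"
  proof -
    have i: "inj_on (rot q k) {1..q}" using b bij_is_inj inj_on_subset by blast
    then have "rot q k ` {1..q} = {1..q}" using s endo_inj_surj[of "{1..q}"] by blast
    with i show ?thesis by (simp add: bij_betw_def)
  qed
qed (simp add: rot_def del: atLeastAtMost_iff)
definition cyc :: "nat \<Rightarrow> nat \<Rightarrow> nat \<Rightarrow> nat" where
  "cyc q m i = (if i \<in> {1..m} then (if q dvd i then i + 1 - q else i + 1) else i)"

definition cycinv :: "nat \<Rightarrow> nat \<Rightarrow> nat \<Rightarrow> nat" where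
  "cycinv q m i = (if i \<in> {1..m} then (if q dvd (i - 1) then i + q - 1 else i - 1) else i)"

lemma cyc_permutes:
  assumes "q > 0" "q dvd m" shows "cyc q m permutes {1..m}"
proof (rule bij_imp_permutes)
  have into: "cyc q m ` {1..m} \<subseteq> {1..m}"
  proof
    fix y assume "y \<in> cyc q m ` {1..m}"
    then obtain i where i: "i \<in> {1..m}" "y = cyc q m i" by auto
    show "y \<in> {1..m}"
    proof (cases "q dvd i")
      case True
      then have "q \<le> i" using i by (auto dest: dvd_imp_le)
      then have "i + 1 - q \<in> {1..m}" using i assms by auto
      then show ?thesis using True i by (simp add: cyc_def)
    next
      case False
      have "i \<noteq> m" using False assms by auto
      then show ?thesis using i False by (auto simp: cyc_def)
    qed
  qed
  have inv: "cycinv q m (cyc q m i) = i" if "i \<in> {1..m}" for i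
  proof (cases "q dvd i")
    case True
    then have "q \<le> i" using that dvd_imp_le by auto
    have "cyc q m i = i + 1 - q" using True that by (simp add: cyc_def)
    moreover have "q dvd (i + 1 - q - 1)" using True \<open>q \<le> i\<close>
      by (simp add: dvd_diff_nat)
    moreover have "i + 1 - q \<in> {1..m}" using that \<open>q \<le> i\<close> assms by auto
    ultimately show ?thesis using \<open>q \<le> i\<close> by (simp add: cycinv_def)
  next
    case False
    have "i \<noteq> m" using False assms by auto
    then show ?thesis using that False by (auto simp: cyc_def cycinv_def)
  qed
  have i: "inj_on (cyc q m) {1..m}" using inv by (rule inj_on_inverseI)
  then have "cyc q m ` {1..m} = {1..m}" using into endo_inj_surj[of "{1..m}"] by blast
  with i show "bij_betw (cyc q m) {1..m} {1..m}" by (simp add: bij_betw_def)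
qed (simp add: cyc_def del: atLeastAtMost_iff)

definition prof :: "nat \<Rightarrow> nat \<Rightarrow> nat \<Rightarrow> nat \<Rightarrow> nat" where
  "prof h q i = (if i \<in> {1..h} then rot q (i - 1) else id)"

lemma rot_mod: "rot q a = rot q (a mod q)"
proof
  fix x 
  have "(x - 1 + a) mod q = (x - 1 + a mod q) mod q" by (simp add: mod_add_right_eq)
  then show "rot q a x = rot q (a mod q) x"
    unfolding rot_def by (simp only:)
qed

lemma prof_step:
  assumes "q > 0" "q dvd h" "j \<in> {1..h}"
  shows "rot q 1 \<circ> prof h q j = prof h q (cyc q h j)"
proof -
  have cj: "cyc q h j \<in> {1..h}" using permutes_in_image[OF cyc_permutes[OF assms(1,2)]] assms(3)
    by blast
  have "(cyc q h j - 1) mod q = (j - 1 + 1) mod q"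
  proof (cases "q dvd j")
    case True
    then have "q \<le> j" using assms dvd_imp_le by auto
    then have "cyc q h j - 1 = j - q" using True assms by (simp add: cyc_def)
    moreover have "j - 1 + 1 = j" using assms(3) by simp
    ultimately show ?thesis using \<open>q \<le> j\<close> le_mod_geq[of q j] by simp
  next
    case False
    then show ?thesis using assms by (simp add: cyc_def)
  qed
  then have "rot q (cyc q h j - 1) = rot q (1 + (j - 1))"
    using rot_mod[of q "cyc q h j - 1"] rot_mod[of q "j - 1 + 1"] by (simp only: add.commute)
  moreover have "prof h q (cyc q h j) = rot q (cyc q h j - 1)" using cj by (simp add: prof_def)
  moreover have "prof h q j = rot q (j - 1)" using assms(3) by (simp add: prof_def)
  ultimately show ?thesis using rot_comp[OF assms(1), of 1 "j - 1"] by simp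
qed

theorem mainTheorem11:
  fixes h n :: nat
  assumes "h \<ge> 2" and "n \<ge> 2"
    and "\<forall>U. subgroup U (sym_group h \<times>\<times> sym_group n) \<longrightarrow> is_symmetry_group h n U"
  shows "gcd h (fact n) = 1"
proof (rule ccontr)
  assume "gcd h (fact n) \<noteq> 1"
  then obtain q :: nat where q: "prime q" "q dvd gcd h (fact n)"
    using prime_factor_nat by blast
  then have qh: "q dvd h" and "q dvd fact n" by auto
  then have qn: "q \<le> n" using q prime_dvd_fact_iff by blast
  have q2: "q \<ge> 2" using q(1) prime_ge_2_nat by blast
  then have q0: "q > 0" by simp
  define \<phi> where "\<phi> = cyc q h"
  define \<psi> where "\<psi> = rot q 1"
  define P where "P = prof h q"
  have phi: "\<phi> permutes {1..h}" unfolding \<phi>_def using cyc_permutes q0 qh by blast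
  have psi: "\<psi> permutes {1..n}" unfolding \<psi>_def
  proof -
    have "{1..q} \<subseteq> {1..n}" using qn by auto
    then show "rot q 1 permutes {1..n}" using permutes_subset[OF rot_permutes[OF q0]] by blast
  qed
  have grp: "group (sym_group h \<times>\<times> sym_group n)"
    by (simp add: DirProd_group sym_group_is_group)
  have "subgroup (carrier (sym_group h \<times>\<times> sym_group n)) (sym_group h \<times>\<times> sym_group n)"
    using group.subgroup_self[OF grp] .
  with assms(3) obtain F where F: "is_SPF h n F"
    "carrier (sym_group h \<times>\<times> sym_group n) = spf_symmetry_group h n F"
    unfolding is_symmetry_group_def by blast
  have mem: "(\<phi>, \<psi>) \<in> spf_symmetry_group h n F"
    using F(2)[symmetric] phi psi by (simp add: sym_group_def)
  have Pprof: "P \<in> profiles h n"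
  proof -
    have sub: "{1..q} \<subseteq> {1..n}" using qn by auto
    have "P i permutes {1..n}" if "i \<in> {1..h}" for i
      using that permutes_subset[OF rot_permutes[OF q0] sub] by (simp add: P_def prof_def)
    moreover have "P i = id" if "i \<notin> {1..h}" for i
      using that by (simp add: P_def prof_def del: atLeastAtMost_iff)
    ultimately show ?thesis unfolding profiles_def by blast
  qed
  have fixP: "prof_act h P (\<phi>, \<psi>) = P"
  proof
    fix i
    show "prof_act h P (\<phi>, \<psi>) i = P i"
    proof (cases "i \<in> {1..h}")
      case True
      let ?j = "Hilbert_Choice.inv \<phi> i"
      have j: "?j \<in> {1..h}" using True phi
        using permutes_in_image[OF permutes_inv[OF phi]] by blast
      have "\<phi> ?j = i" using phi permutes_inverses(1) by fast
      have "prof_act h P (\<phi>, \<psi>) i = \<psi> \<circ> P ?j" using True by (simp add: prof_act_def)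
      also have "\<dots> = P (\<phi> ?j)" using prof_step[OF q0 qh j] by (simp only: P_def \<psi>_def \<phi>_def)
      also have "\<dots> = P i" using \<open>\<phi> ?j = i\<close> by simp
      finally show ?thesis .
    qed (simp add: prof_act_def P_def prof_def del: atLeastAtMost_iff)
  qed
  have "\<forall>p\<in>profiles h n. F (prof_act h p (\<phi>, \<psi>)) = \<psi> \<circ> F p"
    using mem by (simp add: spf_symmetry_group_def)
  then have FP: "F P = \<psi> \<circ> F P" using Pprof fixP by metis
  have "bij (F P)" using F(1) Pprof unfolding is_SPF_def
    using permutes_bij by blast
  then have "F P \<circ> Hilbert_Choice.inv (F P) = id" using bij_is_surj surj_iff by blast
  then have "\<psi> = \<psi> \<circ> (F P \<circ> Hilbert_Choice.inv (F P))" by simp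
  also have "\<dots> = (\<psi> \<circ> F P) \<circ> Hilbert_Choice.inv (F P)" by (simp only: comp_assoc)
  also have "\<dots> = id" using FP \<open>F P \<circ> Hilbert_Choice.inv (F P) = id\<close> by simp
  finally have "\<psi> = id" .
  moreover have "\<psi> 1 = 2" using q2 by (simp add: \<psi>_def rot_def)
  ultimately show False by simp
qed

end
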